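(* Let $\vec v_1,\dots,\vec v_l$ be $l$ distinct unit vectors in $\mathbb{R}^3$ with multiplicities $m_i\in\mathbb{N}$ sorted in descending order ($m_1\ge m_2\ge\dots\ge m_l$), such that $\sum_{i=1}^l m_i=n$ for some $n\ge3$ and $m_1<\sum_{i=2}^l m_i$. For $\alpha\in[0,1)$ let $f_\alpha$ be the map on spherical coordinates $(\theta,\phi)\in[0,\pi]\times[0,2\pi]$ given by $f_\alpha(\theta,\phi)=\big(2\arctan\big(\tfrac{1}{1-\alpha}\tan(\theta/2)\big),\phi\big)$ (so that $\theta=0$ and $\theta=\pi$ are fixed), acting on unit vectors $\vec v=(\sin\theta\cos\phi,\sin\theta\sin\phi,\cos\theta)^T$. Then there exist a rotation $O\in SO(3)$ and $\alpha\in[0,1)$ such that the vectors $\vec v_i'=f_\alpha(O\vec v_i)$ satisfy $\sum_{i=1}^l m_i\vec v_i'=\vec 0$. *)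

theory Defs
  imports "HOL-Analysis.Analysis"
begin

definition sph :: "real \<Rightarrow> real \<Rightarrow> real^3" where
  "sph \<theta> \<phi> = vector [sin \<theta> * cos \<phi>, sin \<theta> * sin \<phi>, cos \<theta>]"

text \<open>Polar angle map of f_alpha; the endpoint theta = pi is fixed by convention
  (the informal formula has tan(pi/2) = infinity there).\<close>
definition f_theta :: "real \<Rightarrow> real \<Rightarrow> real" where
  "f_theta \<alpha> \<theta> = (if \<theta> = pi then pi else 2 * arctan (tan (\<theta> / 2) / (1 - \<alpha>)))"

definition f_alpha :: "real \<Rightarrow> real^3 \<Rightarrow> real^3" where
  "f_alpha \<alpha> v =
     (let \<theta> = arccos (v $ 3);
          \<phi> = (SOME \<phi>. 0 \<le> \<phi> \<and> \<phi> \<le> 2 * pi \<and> sph \<theta> \<phi> = v)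
      in sph (f_theta \<alpha> \<theta>) \<phi>)"

end

theory Submission
  imports Defs
begin
lemma norm3: "(norm (x::real^3))^2 = x$1^2 + x$2^2 + x$3^2"
  by (simp add: norm_eq_sqrt_inner inner_vec_def sum_3 power2_eq_square)
lemma vec3_eq: "(x::real^3) = y \<longleftrightarrow> x$1 = y$1 \<and> x$2 = y$2 \<and> x$3 = y$3"
  by (simp add: vec_eq_iff forall_3)
lemma sph_comp: "sph t p $ 1 = sin t * cos p" "sph t p $ 2 = sin t * sin p" "sph t p $ 3 = cos t"
  by (simp_all add: sph_def)

lemma double_arctan: "sin (2 * arctan x) = 2*x/(1+x^2)" "cos (2 * arctan x) = (1-x^2)/(1+x^2)"
proof -
  have p: "0 < 1 + x^2" by (simp add: add_pos_nonneg)
  have s: "(sqrt (1+x^2))^2 = 1 + x^2" using p by simp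
  show "sin (2 * arctan x) = 2*x/(1+x^2)"
    unfolding sin_double sin_arctan cos_arctan using p s
    by (simp add: field_simps power2_eq_square)
  show "cos (2 * arctan x) = (1-x^2)/(1+x^2)"
    unfolding cos_double sin_arctan cos_arctan using p s
    by (simp add: field_simps power2_eq_square power_divide)
qed

lemma f_closed:
  assumes w: "norm w = 1" and a0: "0 \<le> \<alpha>" and a1: "\<alpha> < 1"
  defines "k \<equiv> 1/(1-\<alpha>)"
  shows "f_alpha \<alpha> w = (1 / ((1+k^2) + (1-k^2)*w$3)) *\<^sub>R
           vector [2*k*w$1, 2*k*w$2, (1-k^2) + (1+k^2)*w$3]"
proof -
  define c where "c = w$3"
  define \<theta> where "\<theta> = arccos c"
  have sq: "w$1^2 + w$2^2 + c^2 = 1" using norm3[of w] w c_def by simp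
  have c21: "c^2 \<le> 1" using sq by (smt (verit) zero_le_power2)
  have cb: "-1 \<le> c" "c \<le> 1" using c21 abs_square_le_1[of c] by auto+
  have cth: "cos \<theta> = c" using cb by (simp add: \<theta>_def)
  have thb: "0 \<le> \<theta>" "\<theta> \<le> pi" using cb by (simp_all add: \<theta>_def arccos_lbound arccos_ubound)
  have sth: "sin \<theta> = sqrt (1 - c^2)" using cb by (simp add: \<theta>_def sin_arccos)
  have sth2: "(sin \<theta>)^2 = 1 - c^2" unfolding sth using c21 by (simp del: abs_square_le_1)
  have sth0: "sin \<theta> \<ge> 0" unfolding sth using c21 by (simp del: abs_square_le_1)
  have ex: "\<exists>\<phi>. 0 \<le> \<phi> \<and> \<phi> \<le> 2 * pi \<and> sph \<theta> \<phi> = w"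
  proof (cases "sin \<theta> = 0")
    case True
    then have "w$1^2 + w$2^2 = 0" using sq sth2 by simp
    then have "w$1 = 0" "w$2 = 0" by (simp_all add: sum_power2_eq_zero_iff)
    then show ?thesis using True cth c_def
      by (intro exI[of _ 0]) (simp add: vec3_eq sph_comp)
  next
    case False
    then have sp: "sin \<theta> > 0" using sth0 by simp
    have "(w$1 / sin \<theta>)^2 + (w$2 / sin \<theta>)^2 = 1"
      using sq sth2 sp by (simp add: power_divide field_simps)
    then obtain t where t: "0 \<le> t" "t < 2*pi" "w$1 / sin \<theta> = cos t" "w$2 / sin \<theta> = sin t"
      by (rule sincos_total_2pi)
    show ?thesis using t sp cth c_def
      by (intro exI[of _ t]) (simp add: vec3_eq sph_comp field_simps)
  qed
  define \<phi> where "\<phi> = (SOME \<phi>. 0 \<le> \<phi> \<and> \<phi> \<le> 2 * pi \<and> sph \<theta> \<phi> = w)"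
  have phi: "sph \<theta> \<phi> = w" using someI_ex[OF ex] \<phi>_def by blast
  have w1: "sin \<theta> * cos \<phi> = w$1" and w2: "sin \<theta> * sin \<phi> = w$2"
    using phi by (auto simp: vec3_eq sph_comp)
  have fa: "f_alpha \<alpha> w = sph (f_theta \<alpha> \<theta>) \<phi>"
    unfolding f_alpha_def Let_def \<theta>_def[symmetric] c_def[symmetric] \<phi>_def[symmetric] ..
  have kpos: "k > 0" using a1 by (simp add: k_def)
  show ?thesis
  proof (cases "\<theta> = pi")
    case True
    then have c: "c = -1" using cth by simp
    then have "w$1^2 + w$2^2 = 0" using sq by simp
    then have "w$1 = 0" "w$2 = 0" by (simp_all add: sum_power2_eq_zero_iff)
    then show ?thesis using True c c_def kpos
      by (simp add: fa f_theta_def vec3_eq sph_comp field_simps)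
  next
    case False
    then have thl: "\<theta> < pi" using thb by simp
    have cg: "c > -1"
    proof (rule ccontr)
      assume "\<not> c > -1" then have "c = -1" using cb by simp
      then have "\<theta> = pi" by (simp add: \<theta>_def)
      then show False using False by simp
    qed
    define t where "t = tan (\<theta>/2)"
    have t: "t = sin \<theta> / (1 + c)" using tan_half[of "\<theta>/2"] cth by (simp add: t_def add.commute)
    have t2: "t^2 = (1 - c) / (1 + c)"
    proof -
      have "t^2 = (sin \<theta>)^2/(1+c)^2" by (simp add: t power_divide)
      also have "\<dots> = (1-c)*(1+c)/(1+c)^2" using sth2 by (simp add: algebra_simps power2_eq_square)
      also have "\<dots> = (1-c)/(1+c)" using cg by (simp add: power2_eq_square)
      finally show ?thesis .
    qed
    have ft: "f_theta \<alpha> \<theta> = 2 * arctan (k * t)"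
      using False by (simp add: f_theta_def k_def t_def)
    have kt2: "(k*t)^2 = k^2 * t^2" by (simp add: power_mult_distrib)
    have D: "(1+k^2) + (1-k^2)*c = (1+c) * (1 + (k*t)^2)"
      using cg by (simp add: kt2 t2 field_simps)
    have Dp: "(1+c) * (1 + (k*t)^2) > 0" using cg by (simp add: add_pos_nonneg)
    have e1: "t * cos \<phi> = w$1 / (1+c)" proof -
      have "t * cos \<phi> = (sin \<theta> * cos \<phi>) / (1+c)" by (simp add: t)
      then show ?thesis using w1 by simp
    qed
    have e2: "t * sin \<phi> = w$2 / (1+c)" proof -
      have "t * sin \<phi> = (sin \<theta> * sin \<phi>) / (1+c)" by (simp add: t)
      then show ?thesis using w2 by simp
    qed
    have "sph (f_theta \<alpha> \<theta>) \<phi> = (1 / ((1+k^2) + (1-k^2)*c)) *\<^sub>R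
           vector [2*k*w$1, 2*k*w$2, (1-k^2) + (1+k^2)*c]"
    proof -
      have a: "2 * (k * t) / (1 + (k * t)\<^sup>2) * cos \<phi> = 2*k*w$1 / ((1+c) * (1 + (k*t)^2))"
      proof -
        have "2 * (k * t) / (1 + (k * t)\<^sup>2) * cos \<phi> = 2*k*(t*cos \<phi>) / (1 + (k*t)^2)" by simp
        then show ?thesis unfolding e1 by simp
      qed
      have b: "2 * (k * t) / (1 + (k * t)\<^sup>2) * sin \<phi> = 2*k*w$2 / ((1+c) * (1 + (k*t)^2))"
      proof -
        have "2 * (k * t) / (1 + (k * t)\<^sup>2) * sin \<phi> = 2*k*(t * sin \<phi>) / (1 + (k*t)^2)" by simp
        then show ?thesis unfolding e2 by simp
      qed
      have d: "(1 - (k*t)^2) / (1 + (k*t)^2) = ((1-k^2) + (1+k^2)*c) / ((1+c) * (1 + (k*t)^2))"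
        using cg Dp by (simp add: kt2 t2 field_simps)
      show ?thesis unfolding D using a b d
        by (simp add: vec3_eq sph_comp ft double_arctan)
    qed
    then show ?thesis using fa c_def by simp
  qed
qed

definition phi :: "real^3 \<Rightarrow> real^3 \<Rightarrow> real^3" where
  "phi a w = ((1 - (norm a)^2) / (norm (w - a))^2) *\<^sub>R (w - a) - a"

lemma f_phi:
  assumes w: "norm w = 1" and s0: "0 \<le> s" and s1: "s < 1"
  shows "f_alpha (2* s/(1+s)) w = phi (vector [0,0,s]) w"
proof -
  have a0: "0 \<le> 2* s/(1+s)" using s0 by simp
  have a1: "2* s/(1+s) < 1" using s0 s1 by (simp add: field_simps)
  have k: "1/(1 - 2* s/(1+s)) = (1+s)/(1-s)" using s0 s1 by (simp add: field_simps)
  have sq: "w$1^2 + w$2^2 + w$3^2 = 1" using norm3[of w] w by simp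
  have nd: "(norm (w - vector [0,0,s]))^2 = 1 + s^2 - 2* s*w$3"
    unfolding norm3 using sq by (simp add: power2_eq_square algebra_simps)
  have wz: "w$3 \<le> 1"
  proof -
    have "w$3^2 \<le> 1" using sq by (smt (verit) zero_le_power2)
    then show ?thesis using abs_square_le_1[of "w$3"] by auto
  qed
  have Dp: "1 + s^2 - 2* s*w$3 > 0"
  proof -
    have "2* s*w$3 \<le> 2* s" using wz s0 by (simp add: mult_left_le)
    moreover have "1 + s^2 - 2* s = (1-s)^2" by (simp add: power2_eq_square algebra_simps)
    moreover have "(1-s)^2 > 0" using s1 by simp
    ultimately show ?thesis by linarith
  qed
  define Q where "Q = 1 + s^2 - 2 * s * w$3"
  define k where "k = (1+s)/(1-s)"
  have e1: "1 + k^2 = 2 * (1 + s^2) / (1-s)^2" using s1 unfolding k_def power_divide by (simp add: field_simps) (simp add: eval_nat_numeral algebra_simps)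
  have e2: "1 - k^2 = - 4 * s / (1-s)^2" using s1 unfolding k_def power_divide by (simp add: field_simps) (simp add: eval_nat_numeral algebra_simps)
  have D: "(1+k^2) + (1-k^2)*w$3 = 2*Q/(1-s)^2"
    unfolding e1 e2 Q_def using s1 by (simp add: field_simps)
  have Qp: "Q > 0" using Dp Q_def by simp
  have c1: "1 / (2*Q/(1-s)^2) * (2*k*w$1) = (1 - s^2)/Q * w$1"
    using s1 Qp by (simp add: k_def field_simps power2_eq_square)
  have c2: "1 / (2*Q/(1-s)^2) * (2*k*w$2) = (1 - s^2)/Q * w$2"
    using s1 Qp by (simp add: k_def field_simps power2_eq_square)
  have ne: "(1-s)^2 \<noteq> 0" using s1 by simp
  have num3: "(1-k^2) + (1+k^2)*w$3 = (2*(1+s^2)*w$3 - 4* s)/(1-s)^2"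
    unfolding e1 e2 using ne by (simp add: field_simps)
  have c3: "1 / (2*Q/(1-s)^2) * ((1-k^2) + (1+k^2)*w$3) = (1 - s^2)/Q * (w$3 - s) - s"
  proof -
    have "1 / (2*Q/(1-s)^2) * ((1-k^2) + (1+k^2)*w$3) = (2*(1+s^2)*w$3 - 4* s) / (2*Q)"
      unfolding num3 using ne Qp by simp
    also have "\<dots> = (1 - s^2)/Q * (w$3 - s) - s"
      using Qp by (simp add: field_simps) (simp add: Q_def algebra_simps power2_eq_square)
    finally show ?thesis .
  qed
  have nv: "(norm (vector [0,0,s] :: real^3))^2 = s^2" by (simp add: norm3)
  show ?thesis
    unfolding f_closed[OF w a0 a1] k k_def[symmetric] phi_def nd Q_def[symmetric] D nv
    using c1 c2 c3 by (simp add: vec3_eq)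
qed

lemma phi_orth:
  assumes "orthogonal_transformation g"
  shows "phi (g x) (g w) = g (phi x w)"
proof -
  interpret linear g using assms by (simp add: orthogonal_transformation)
  have n: "\<And>y. norm (g y) = norm y" using assms orthogonal_transformation_norm by blast
  have n2: "norm (g w - g x) = norm (w - x)" using n[of "w-x"] diff by simp
  show ?thesis unfolding phi_def by (simp add: n n2 diff scale)
qed


lemma sep_exists:
  fixes v :: "nat \<Rightarrow> real^3" and I :: "nat set"
  assumes fin: "finite I" and inj: "inj_on v I"
  shows "\<exists>\<delta>>0. \<delta> \<le> 1 \<and> (\<forall>i\<in>I. \<forall>j\<in>I. i \<noteq> j \<longrightarrow> 2 * \<delta> \<le> norm (v i - v j))"
proof -
  define P where "P = {(i,j). i\<in>I \<and> j\<in>I \<and> i \<noteq> j}"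
  have fP: "finite P" by (rule finite_subset[of P "I \<times> I"]) (auto simp: P_def fin)
  define S where "S = insert 2 ((\<lambda>(i,j). norm (v i - v j)) ` P)"
  have fS: "finite S" using fP by (simp add: S_def)
  have Spos: "\<forall>y\<in>S. 0 < y"
    using inj unfolding S_def P_def by (auto simp: inj_on_def)
  have Mpos: "0 < Min S" using fS Spos by (simp add: S_def)
  have M2: "Min S \<le> 2" using fS by (simp add: S_def)
  show ?thesis
  proof (intro exI[of _ "Min S / 2"] conjI ballI impI)
    show "0 < Min S / 2" using Mpos by simp
    show "Min S / 2 \<le> 1" using M2 by simp
    fix i j assume "i \<in> I" "j \<in> I" "i \<noteq> j"
    then have "norm (v i - v j) \<in> S" unfolding S_def P_def by force
    then have "Min S \<le> norm (v i - v j)" using fS by simp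
    then show "2 * (Min S / 2) \<le> norm (v i - v j)" by simp
  qed
qed

definition Phi :: "nat set \<Rightarrow> (nat \<Rightarrow> nat) \<Rightarrow> (nat \<Rightarrow> real^3) \<Rightarrow> real^3 \<Rightarrow> real" where
  "Phi I m v x = (\<Sum>i\<in>I. real (m i) * (ln ((norm (x - v i))^2) - ln (1 - (norm x)^2)))"

lemma coercive:
  fixes v :: "nat \<Rightarrow> real^3" and m :: "nat \<Rightarrow> nat" and I :: "nat set"
  assumes fin: "finite I" and ne: "I \<noteq> {}" and inj: "inj_on v I"
    and unit: "\<And>i. i\<in>I \<Longrightarrow> norm (v i) = 1"
    and small: "\<And>j. j\<in>I \<Longrightarrow> 2 * m j < (\<Sum>i\<in>I. m i)"
  shows "\<exists>r. 0 < r \<and> r < 1 \<and> (\<forall>x. norm x = r \<longrightarrow> Phi I m v x > 0)"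
proof -
  obtain \<delta> where d0: "\<delta> > 0" and d1: "\<delta> \<le> 1"
    and dsep: "\<And>i j. i\<in>I \<Longrightarrow> j\<in>I \<Longrightarrow> i \<noteq> j \<Longrightarrow> 2 * \<delta> \<le> norm (v i - v j)"
    using sep_exists[OF fin inj] by blast
  define N where "N = (\<Sum>i\<in>I. real (m i))"
  obtain j0 where "j0 \<in> I" using ne by blast
  have N1: "N \<ge> 1" using small[OF \<open>j0 \<in> I\<close>] unfolding N_def of_nat_sum[symmetric] by linarith
  have ld: "ln \<delta> \<le> 0" using d0 d1 by simp
  have l2: "ln 2 \<ge> (0::real)" by simp
  define a where "a = 2 * ln \<delta> - ln 2"
  have a0: "a \<le> 0" using ld l2 a_def by linarith
  define K where "K = 2 * N * ln 2 - 2 * N * ln \<delta>"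
  have K0: "K \<ge> 0"
  proof -
    have "ln 2 - ln \<delta> \<ge> 0" using ld l2 by linarith
    then have "2 * N * (ln 2 - ln \<delta>) \<ge> 0" using N1 by simp
    then show ?thesis unfolding K_def by (simp add: algebra_simps)
  qed
  define \<epsilon> where "\<epsilon> = exp (-(K+1))"
  define L where "L = K + 1"
  have e0: "\<epsilon> > 0" by (simp add: \<epsilon>_def)
  have e1: "\<epsilon> < 1" using K0 by (simp add: \<epsilon>_def)
  have lnE: "ln \<epsilon> = - L" by (simp add: \<epsilon>_def L_def)
  have L0: "L \<ge> 0" using K0 L_def by simp
  define r where "r = 1 - \<epsilon>"
  show ?thesis
  proof (intro exI[of _ r] conjI allI impI)
    show "0 < r" "r < 1" using e0 e1 by (simp_all add: r_def)
    fix x :: "real^3" assume nx: "norm x = r"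
    define t where "t i = ln ((norm (x - v i))^2) - ln (1 - (norm x)^2)" for i
    have Phit: "Phi I m v x = (\<Sum>i\<in>I. real (m i) * t i)" by (simp add: Phi_def t_def)
    have r2: "1 - r^2 > 0" "1 - r^2 \<le> 2 * \<epsilon>" using e0 e1
      by (simp_all add: r_def power2_eq_square algebra_simps)
    have lnr: "ln (1 - (norm x)^2) \<le> ln 2 - L"
    proof -
      have "ln (1 - (norm x)^2) \<le> ln (2 * \<epsilon>)" using r2 nx by simp
      also have "\<dots> = ln 2 + ln \<epsilon>" using e0 by (simp add: ln_mult)
      finally show ?thesis using lnE by simp
    qed
    have near: "t i \<ge> - L - ln 2" if "i \<in> I" for i
    proof -
      have "norm (v i) \<le> norm (v i - x) + norm x" using norm_triangle_ineq[of "v i - x" x] by simp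
      then have "\<epsilon> \<le> norm (x - v i)" using unit[OF that] nx r_def by (simp add: norm_minus_commute)
      then have "\<epsilon>^2 \<le> (norm (x - v i))^2" using e0 by (simp add: power_mono)
      then have "ln (\<epsilon>^2) \<le> ln ((norm (x - v i))^2)"
      proof -
        assume h: "\<epsilon>^2 \<le> (norm (x - v i))^2"
        have p1: "0 < \<epsilon>^2" using e0 by simp
        have p2: "0 < (norm (x - v i))^2" using p1 h by linarith
        show ?thesis using h by (simp only: ln_le_cancel_iff[OF p1 p2])
      qed
      moreover have "ln (\<epsilon>^2) = - 2 * L" using e0 lnE by (simp add: ln_realpow)
      ultimately show ?thesis using lnr t_def by simp
    qed
    have far: "t i \<ge> a + L" if "i \<in> I" "norm (x - v i) \<ge> \<delta>" for i
    proof -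
      have "\<delta>^2 \<le> (norm (x - v i))^2" using d0 that by (simp add: power_mono)
      then have "ln (\<delta>^2) \<le> ln ((norm (x - v i))^2)"
      proof -
        assume h: "\<delta>^2 \<le> (norm (x - v i))^2"
        have p1: "0 < \<delta>^2" using d0 by simp
        have p2: "0 < (norm (x - v i))^2" using p1 h by linarith
        show ?thesis using h by (simp only: ln_le_cancel_iff[OF p1 p2])
      qed
      moreover have "ln (\<delta>^2) = 2 * ln \<delta>" using d0 by (simp add: ln_realpow)
      ultimately show ?thesis using lnr t_def a_def by simp
    qed
    show "Phi I m v x > 0"
    proof (cases "\<exists>j\<in>I. norm (x - v j) < \<delta>")
      case True
      then obtain j where j: "j \<in> I" "norm (x - v j) < \<delta>" by blast
      have farj: "t i \<ge> a + L" if "i \<in> I - {j}" for i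
      proof -
        have "2 * \<delta> \<le> norm (v i - v j)" using dsep that j by auto
        also have "\<dots> \<le> norm (x - v j) + norm (x - v i)"
        proof -
          have "v i - v j = (x - v j) - (x - v i)" by simp
          then show ?thesis using norm_triangle_ineq4[of "x - v j" "x - v i"] by simp
        qed
        finally show ?thesis using far that j by simp
      qed
      have "Phi I m v x = real (m j) * t j + (\<Sum>i\<in>I-{j}. real (m i) * t i)"
        unfolding Phit using fin j by (simp add: sum.remove)
      also have "\<dots> \<ge> real (m j) * (- L - ln 2) + (\<Sum>i\<in>I-{j}. real (m i) * (a + L))"
        by (intro add_mono mult_left_mono near j sum_mono farj) auto
      finally have P1: "Phi I m v x \<ge> real (m j) * (- L - ln 2) + (N - real (m j)) * (a + L)"
        unfolding sum_distrib_right[symmetric] N_def using fin j by (simp add: sum.remove)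
      have mj: "N - 2 * real (m j) \<ge> 1" using small[OF j(1)] unfolding N_def of_nat_sum[symmetric] by linarith
      have mjN: "real (m j) \<le> N" using mj by simp
      have f1: "(N - 2 * real (m j) - 1) * L \<ge> 0" using mj L0 by simp
      have f2: "(N - real (m j)) * ln 2 \<ge> 0" using mjN l2 by simp
      have f3: "real (m j) * a \<le> 0" using a0 by (simp add: mult_nonneg_nonpos)
      have "real (m j) * (- L - ln 2) + (N - real (m j)) * (a + L) = 1 + (N - 2 * real (m j) - 1) * L + (N - real (m j)) * ln 2 - real (m j) * a"
        by (simp add: L_def K_def a_def algebra_simps)
      then show ?thesis using P1 f1 f2 f3 by linarith
    next
      case False
      then have "\<forall>i\<in>I. t i \<ge> a + L" using far by force
      then have "Phi I m v x \<ge> (\<Sum>i\<in>I. real (m i) * (a + L))"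
        unfolding Phit by (intro sum_mono mult_left_mono) auto
      then have P1: "Phi I m v x \<ge> N * (a + L)" unfolding sum_distrib_right[symmetric] N_def .
      have f1: "(N - 1) * L \<ge> 0" using N1 L0 by simp
      have "N * (a + L) = 1 + (N - 1) * L + N * ln 2" by (simp add: L_def K_def a_def algebra_simps)
      moreover have f2: "N * ln 2 \<ge> 0" using N1 l2 by simp
      ultimately show ?thesis using P1 f1 by linarith
    qed
  qed
qed

lemma barycenter:
  fixes v :: "nat \<Rightarrow> real^3" and m :: "nat \<Rightarrow> nat" and I :: "nat set"
  assumes fin: "finite I" and ne: "I \<noteq> {}" and inj: "inj_on v I"
    and unit: "\<And>i. i\<in>I \<Longrightarrow> norm (v i) = 1"
    and small: "\<And>j. j\<in>I \<Longrightarrow> 2 * m j < (\<Sum>i\<in>I. m i)"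
  shows "\<exists>x. norm x < 1 \<and> (\<Sum>i\<in>I. real (m i) *\<^sub>R phi x (v i)) = 0"
proof -
  obtain r where r0: "0 < r" and r1: "r < 1" and rb: "\<And>x. norm x = r \<Longrightarrow> Phi I m v x > 0"
    using coercive[OF fin ne inj unit small] by blast
  define C where "C = cball (0::real^3) r"
  have nz: "norm (x - v i) > 0" if "norm x < 1" "i \<in> I" for x i
  proof -
    have "x \<noteq> v i" using that unit[OF that(2)] by auto
    then show ?thesis by simp
  qed
  have cont: "continuous_on C (Phi I m v)"
  proof -
    have "continuous_on C (\<lambda>x. \<Sum>i\<in>I. real (m i) * (ln ((norm (x - v i))^2) - ln (1 - (norm x)^2)))"
    proof (intro continuous_intros ballI)
      fix x i assume "x \<in> C" "i \<in> I"
      then have "norm x < 1" using r1 by (simp add: C_def)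
      then show "(norm (x - v i))^2 \<noteq> 0" using nz \<open>i \<in> I\<close> by force
    next
      fix x i assume "x \<in> C"
      then have "norm x < 1" using r1 by (simp add: C_def)
      then have "(norm x)^2 < 1" by (simp add: abs_square_less_1)
      then show "1 - (norm x)^2 \<noteq> 0" by simp
    qed
    then show ?thesis unfolding Phi_def[abs_def] .
  qed
  obtain X where XC: "X \<in> C" and Xmin: "\<And>y. y \<in> C \<Longrightarrow> Phi I m v X \<le> Phi I m v y"
    using continuous_attains_inf[OF compact_cball[of 0 r] _ cont[unfolded C_def]] r0 unfolding C_def
    by fastforce
  have Phi0: "Phi I m v 0 = 0" unfolding Phi_def using unit by simp
  have Xr: "norm X < r"
  proof (rule ccontr)
    assume "\<not> norm X < r"
    then have "norm X = r" using XC by (simp add: C_def)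
    then have "Phi I m v X > 0" by (rule rb)
    moreover have "Phi I m v X \<le> Phi I m v 0" using Xmin r0 by (simp add: C_def)
    ultimately show False using Phi0 by simp
  qed
  have X1: "norm X < 1" using Xr r1 by simp
  define Xn where "Xn = (norm X)^2"
  have Xn1: "Xn < 1" using X1 by (simp add: Xn_def abs_square_less_1)
  define S where "S = (\<Sum>i\<in>I. real (m i) *\<^sub>R (((1 - Xn)/(norm (X - v i))^2) *\<^sub>R (X - v i) + X))"
  have S0: "S = 0"
  proof -
    define e where "e = S"
    define A where "A i = (norm (X - v i))^2" for i
    define B where "B i = inner (X - v i) e" for i
    define E where "E = inner e e"
    define Cc where "Cc = inner X e"
    have Apos: "A i > 0" if "i \<in> I" for i using nz[OF X1 that] by (simp add: A_def)
    have expand: "(norm (y + t *\<^sub>R e))^2 = (norm y)^2 + 2*t*inner y e + t^2 * E" for y t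
      unfolding power2_norm_eq_inner E_def
      by (simp add: inner_add_left inner_add_right inner_commute algebra_simps power2_eq_square)
    define g where "g t = Phi I m v (X + t *\<^sub>R e)" for t
    have g_eq: "g = (\<lambda>t. \<Sum>i\<in>I. real (m i) * (ln (A i + 2*t*B i + t^2*E) - ln (1 - (Xn + 2*t*Cc + t^2*E))))"
    proof
      fix t
      have "X + t *\<^sub>R e - v i = (X - v i) + t *\<^sub>R e" for i by (simp add: algebra_simps)
      then show "g t = (\<Sum>i\<in>I. real (m i) * (ln (A i + 2*t*B i + t^2*E) - ln (1 - (Xn + 2*t*Cc + t^2*E))))"
        unfolding g_def Phi_def by (simp only: expand A_def B_def Cc_def Xn_def)
    qed
    define D where "D = (\<Sum>i\<in>I. real (m i) * (2 * B i / A i + 2 * Cc / (1 - Xn)))"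
    have deriv: "DERIV g 0 :> D"
      unfolding g_eq D_def
    proof (rule DERIV_sum)
      fix i assume i: "i \<in> I"
      have d1: "DERIV (\<lambda>t. ln (A i + 2*t*B i + t^2*E)) 0 :> 2 * B i / A i"
        using Apos[OF i] by (auto intro!: derivative_eq_intros)
      have d2: "DERIV (\<lambda>t. ln (1 - (Xn + 2*t*Cc + t^2*E))) 0 :> - (2 * Cc) / (1 - Xn)"
        using Xn1 by (auto intro!: derivative_eq_intros)
      show "DERIV (\<lambda>t. real (m i) * (ln (A i + 2*t*B i + t^2*E) - ln (1 - (Xn + 2*t*Cc + t^2*E)))) 0
              :> real (m i) * (2 * B i / A i + 2 * Cc / (1 - Xn))"
        using DERIV_cmult[OF DERIV_diff[OF d1 d2], of "real (m i)"] by simp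
    qed
    define d where "d = (r - norm X) / (norm e + 1)"
    have ep: "norm e + 1 > 0" by (simp add: add_nonneg_pos)
    have d0: "d > 0" using Xr ep unfolding d_def by (intro divide_pos_pos) auto
    have lmin: "\<forall>t. \<bar>0 - t\<bar> < d \<longrightarrow> g 0 \<le> g t"
    proof (intro allI impI)
      fix t :: real assume "\<bar>0 - t\<bar> < d"
      then have t: "\<bar>t\<bar> < d" by simp
      have "norm (X + t *\<^sub>R e) \<le> norm X + \<bar>t\<bar> * norm e" using norm_triangle_ineq[of X "t *\<^sub>R e"] by simp
      also have "\<dots> \<le> norm X + \<bar>t\<bar> * (norm e + 1)" by (simp add: mult_left_mono)
      also have "\<dots> \<le> norm X + d * (norm e + 1)" using t by (intro add_left_mono mult_right_mono) auto
      also have "\<dots> = r" using ep by (simp add: d_def)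
      finally have "X + t *\<^sub>R e \<in> C" by (simp add: C_def)
      then show "g 0 \<le> g t" using Xmin by (simp add: g_def)
    qed
    have D0: "D = 0" by (rule DERIV_local_min[OF deriv d0 lmin])
    have iS: "inner S e = (\<Sum>i\<in>I. real (m i) * ((1 - Xn) / A i * B i + Cc))"
      by (simp add: S_def inner_sum_left inner_add_left A_def B_def Cc_def)
    have "D = 2 / (1 - Xn) * inner S e"
      unfolding iS D_def sum_distrib_left
    proof (rule sum.cong[OF refl])
      fix i assume i: "i \<in> I"
      show "real (m i) * (2 * B i / A i + 2 * Cc / (1 - Xn)) = 2 / (1 - Xn) * (real (m i) * ((1 - Xn) / A i * B i + Cc))"
        using Apos[OF i] Xn1 by (simp add: field_simps)
    qed
    then have "inner S S = 0" using D0 Xn1 e_def by simp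
    then show ?thesis by simp
  qed
  have "(\<Sum>i\<in>I. real (m i) *\<^sub>R phi X (v i)) = - S"
    unfolding S_def sum_negf[symmetric]
  proof (rule sum.cong[OF refl])
    fix i assume i: "i \<in> I"
    have "phi X (v i) = - (((1 - Xn)/(norm (X - v i))^2) *\<^sub>R (X - v i) + X)"
      unfolding phi_def Xn_def by (simp add: norm_minus_commute algebra_simps)
    then show "real (m i) *\<^sub>R phi X (v i) = - (real (m i) *\<^sub>R (((1 - Xn)/(norm (X - v i))^2) *\<^sub>R (X - v i) + X))"
      by (simp only: scaleR_minus_right)
  qed
  then show ?thesis using S0 X1 by auto
qed


theorem lemma4:
  fixes l n :: nat and v :: "nat \<Rightarrow> real^3" and m :: "nat \<Rightarrow> nat"
  assumes distinct: "inj_on v {1..l}"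
    and unit: "\<And>i. i \<in> {1..l} \<Longrightarrow> norm (v i) = 1"
    and sorted: "\<And>i j. 1 \<le> i \<Longrightarrow> i \<le> j \<Longrightarrow> j \<le> l \<Longrightarrow> m j \<le> m i"
    and total: "(\<Sum>i=1..l. m i) = n"
    and n3: "n \<ge> 3"
    and dom: "m 1 < (\<Sum>i=2..l. m i)"
  shows "\<exists>R :: real^3^3. orthogonal_matrix R \<and> det R = 1 \<and>
           (\<exists>\<alpha>. 0 \<le> \<alpha> \<and> \<alpha> < 1 \<and>
              (\<Sum>i=1..l. real (m i) *\<^sub>R f_alpha \<alpha> (R *v v i)) = 0)"
proof -
  have l1: "1 \<le> l"
  proof (rule ccontr)
    assume "\<not> 1 \<le> l" then have "l = 0" by simp
    then show False using total n3 by simp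
  qed
  have split: "(\<Sum>i=1..l. m i) = m 1 + (\<Sum>i=2..l. m i)"
    using l1 by (simp add: sum.atLeast_Suc_atMost numeral_2_eq_2)
  have small: "2 * m j < (\<Sum>i\<in>{1..l}. m i)" if "j \<in> {1..l}" for j
  proof -
    have "m j \<le> m 1" using sorted[of 1 j] that by simp
    then show ?thesis using split dom by simp
  qed
  obtain x where x: "norm x < 1" and sx: "(\<Sum>i\<in>{1..l}. real (m i) *\<^sub>R phi x (v i)) = 0"
    using barycenter[of "{1..l}" v m] distinct unit small l1 by auto
  define s where "s = norm x"
  have s0: "0 \<le> s" and s1: "s < 1" using x by (simp_all add: s_def)
  have nv: "norm (vector [0,0,s] :: real^3) = s"
  proof -
    have "(norm (vector [0,0,s] :: real^3))^2 = s^2" by (simp add: norm3)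
    then show ?thesis using s0 by (simp add: power2_eq_iff_nonneg)
  qed
  obtain g where g: "orthogonal_transformation g" "det (matrix g) = 1" "g x = vector [0,0,s]"
    using rotation_exists[of x "vector [0,0,s] :: real^3"] nv s_def by auto
  interpret lin: linear g using g(1) by (simp add: orthogonal_transformation)
  have lg: "linear g" by unfold_locales
  define R where "R = matrix g"
  have Rv: "R *v y = g y" for y unfolding R_def using matrix_vector_mul(2)[OF lg] by metis
  have oR: "orthogonal_matrix R" using g(1) orthogonal_transformation_matrix R_def by blast
  have "(\<Sum>i=1..l. real (m i) *\<^sub>R f_alpha (2 * s/(1+s)) (R *v v i))
      = (\<Sum>i=1..l. real (m i) *\<^sub>R g (phi x (v i)))"
  proof (rule sum.cong[OF refl])
    fix i assume i: "i \<in> {1..l}"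
    have "norm (g (v i)) = 1" using unit[OF i] g(1) orthogonal_transformation_norm by metis
    then have "f_alpha (2 * s/(1+s)) (g (v i)) = phi (g x) (g (v i))"
      using f_phi[OF _ s0 s1] g(3) by simp
    then show "real (m i) *\<^sub>R f_alpha (2 * s/(1+s)) (R *v v i) = real (m i) *\<^sub>R g (phi x (v i))"
      by (simp add: Rv phi_orth[OF g(1)])
  qed
  also have "\<dots> = g (\<Sum>i=1..l. real (m i) *\<^sub>R phi x (v i))"
    by (simp add: lin.sum lin.scale)
  also have "\<dots> = 0" using sx by simp
  finally have fin: "(\<Sum>i=1..l. real (m i) *\<^sub>R f_alpha (2 * s/(1+s)) (R *v v i)) = 0" .
  have a0: "0 \<le> 2 * s/(1+s)" using s0 by simp
  have a1: "2 * s/(1+s) < 1" using s0 s1 by (simp add: field_simps)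
  show ?thesis using oR g(2) R_def a0 a1 fin by blast
qed

end
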